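(* Let $n\ge 3$. Each of the following representations $\zeta'_i:\mathrm{TVB}_n\to\mathrm{GL}_{n+1}(\mathbb{C})$, $1\le i\le 7$, given by $\zeta'_i(\sigma_k)=L_k(S)$, $\zeta'_i(\rho_k)=L_k(R)$ ($1\le k\le n-1$), $\zeta'_i(\gamma_j)=L_j(G)$ ($1\le j\le n$), is unfaithful (not injective): \begin{itemize} \item[(1)] $\zeta'_1$: $S=\begin{pmatrix}0&b\\ c&0\end{pmatrix}$, $R=\begin{pmatrix}0&-\frac{\sqrt b}{\sqrt c}\\ -\frac{\sqrt c}{\sqrt b}&0\end{pmatrix}$, $G=\mathrm{diag}(-1,1)$, $b,c\in\mathbb{C}^*$. \item[(2)] $\zeta'_2$: $S=\begin{pmatrix}0&b\\ c&0\end{pmatrix}$, $R=\begin{pmatrix}0&\frac{\sqrt b}{\sqrt c}\\ \frac{\sqrt c}{\sqrt b}&0\end{pmatrix}$, $G=\mathrm{diag}(-1,1)$, $b,c\in\mathbb{C}^*$. \item[(3)] $\zeta'_3$: $S$ and $R$ as in (1), $G=I_2$. \item[(4)] $\zeta'_4$: $S$ and $R$ as in (2), $G=I_2$. \item[(5)] $\zeta'_5$: $S=I_2$, $R=\begin{pmatrix}0&x\\ \frac1x&0\end{pmatrix}$, $G=\mathrm{diag}(-1,1)$, $x\in\mathbb{C}^*$. \item[(6)] $\zeta'_6$: $S=I_2$, $R=\begin{pmatrix}0&x\\ \frac1x&0\end{pmatrix}$, $G=I_2$, $x\in\mathbb{C}^*$. \item[(7)] $\zeta'_7$: $S=R=G=I_2$.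 \end{itemize} Here $\mathbb{C}^*=\mathbb{C}\setminus\{0\}$ and $\sqrt b,\sqrt c$ denote square roots of $b,c$.
   Context: For $n\ge 2$, the twisted virtual braid group $\mathrm{TVB}_n$ is the group with generators $\sigma_1,\dots,\sigma_{n-1}$, $\rho_1,\dots,\rho_{n-1}$, $\gamma_1,\dots,\gamma_n$ and defining relations: $\sigma_i\sigma_{i+1}\sigma_i=\sigma_{i+1}\sigma_i\sigma_{i+1}$ ($1\le i\le n-2$); $\sigma_i\sigma_j=\sigma_j\sigma_i$ ($|i-j|\ge2$); $\rho_i^2=1$; $\rho_i\rho_j=\rho_j\rho_i$ ($|i-j|\ge 2$); $\rho_i\rho_{i+1}\rho_i=\rho_{i+1}\rho_i\rho_{i+1}$; $\sigma_i\rho_j=\rho_j\sigma_i$ ($|i-j|\ge 2$); $\rho_i\rho_{i+1}\sigma_i=\sigma_{i+1}\rho_i\rho_{i+1}$; $\gamma_i^2=1$; $\gamma_i\gamma_j=\gamma_j\gamma_i$ (all $i,j$); $\gamma_j\rho_i=\rho_i\gamma_j$ and $\gamma_j\sigma_i=\sigma_i\gamma_j$ ($|i-j|\ge 2$); $\rho_i\gamma_i=\gamma_{i+1}\rho_i$; $\rho_i\sigma_i\rho_i=\gamma_{i+1}\gamma_i\sigma_i\gamma_i\gamma_{i+1}$ ($1\le i\le n-1$). For a $2\times2$ matrix $M$ and $1\le i\le n$, $L_i(M)$ denotes the $(n+1)\times(n+1)$ block-diagonal matrix $\mathrm{diag}(I_{i-1},M,I_{n-i})$. A representation is faithful if it is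 injective. *)

theory Defs
  imports Complex_Main "Jordan_Normal_Form.Matrix" "Jordan_Normal_Form.Gauss_Jordan_Elimination"
begin

datatype tgen = Sg nat | Rh nat | Gm nat

fun valid_gen :: "nat \<Rightarrow> tgen \<Rightarrow> bool" where
  "valid_gen n (Sg k) = (1 \<le> k \<and> k \<le> n - 1)"
| "valid_gen n (Rh k) = (1 \<le> k \<and> k \<le> n - 1)"
| "valid_gen n (Gm j) = (1 \<le> j \<and> j \<le> n)"

text \<open>Words in the free group: letters (g, True) = g, (g, False) = g^{-1}.\<close>
type_synonym tword = "(tgen \<times> bool) list"

definition valid_word :: "nat \<Rightarrow> tword \<Rightarrow> bool" where
  "valid_word n w = (\<forall>l \<in> set w. valid_gen n (fst l))"

definition pos :: "tgen list \<Rightarrow> tword" where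
  "pos u = map (\<lambda>g. (g, True)) u"

inductive tvb_relator :: "nat \<Rightarrow> tgen list \<Rightarrow> tgen list \<Rightarrow> bool" for n where
  r1: "1 \<le> i \<Longrightarrow> i \<le> n - 2 \<Longrightarrow> tvb_relator n [Sg i, Sg (i+1), Sg i] [Sg (i+1), Sg i, Sg (i+1)]"
| r2: "1 \<le> i \<Longrightarrow> i \<le> n - 1 \<Longrightarrow> 1 \<le> j \<Longrightarrow> j \<le> n - 1 \<Longrightarrow> i + 2 \<le> j \<or> j + 2 \<le> i
       \<Longrightarrow> tvb_relator n [Sg i, Sg j] [Sg j, Sg i]"
| r3: "1 \<le> i \<Longrightarrow> i \<le> n - 1 \<Longrightarrow> tvb_relator n [Rh i, Rh i] []"
| r4: "1 \<le> i \<Longrightarrow> i \<le> n - 1 \<Longrightarrow> 1 \<le> j \<Longrightarrow> j \<le> n - 1 \<Longrightarrow> i + 2 \<le> j \<or> j + 2 \<le> i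
       \<Longrightarrow> tvb_relator n [Rh i, Rh j] [Rh j, Rh i]"
| r5: "1 \<le> i \<Longrightarrow> i \<le> n - 2 \<Longrightarrow> tvb_relator n [Rh i, Rh (i+1), Rh i] [Rh (i+1), Rh i, Rh (i+1)]"
| r6: "1 \<le> i \<Longrightarrow> i \<le> n - 1 \<Longrightarrow> 1 \<le> j \<Longrightarrow> j \<le> n - 1 \<Longrightarrow> i + 2 \<le> j \<or> j + 2 \<le> i
       \<Longrightarrow> tvb_relator n [Sg i, Rh j] [Rh j, Sg i]"
| r7: "1 \<le> i \<Longrightarrow> i \<le> n - 2 \<Longrightarrow> tvb_relator n [Rh i, Rh (i+1), Sg i] [Sg (i+1), Rh i, Rh (i+1)]"
| r8: "1 \<le> i \<Longrightarrow> i \<le> n \<Longrightarrow> tvb_relator n [Gm i, Gm i] []"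
| r9: "1 \<le> i \<Longrightarrow> i \<le> n \<Longrightarrow> 1 \<le> j \<Longrightarrow> j \<le> n \<Longrightarrow> tvb_relator n [Gm i, Gm j] [Gm j, Gm i]"
| r10: "1 \<le> i \<Longrightarrow> i \<le> n - 1 \<Longrightarrow> 1 \<le> j \<Longrightarrow> j \<le> n \<Longrightarrow> i + 2 \<le> j \<or> j + 2 \<le> i
       \<Longrightarrow> tvb_relator n [Gm j, Rh i] [Rh i, Gm j]"
| r11: "1 \<le> i \<Longrightarrow> i \<le> n - 1 \<Longrightarrow> 1 \<le> j \<Longrightarrow> j \<le> n \<Longrightarrow> i + 2 \<le> j \<or> j + 2 \<le> i
       \<Longrightarrow> tvb_relator n [Gm j, Sg i] [Sg i, Gm j]"
| r12: "1 \<le> i \<Longrightarrow> i \<le> n - 1 \<Longrightarrow> tvb_relator n [Rh i, Gm i] [Gm (i+1), Rh i]"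
| r13: "1 \<le> i \<Longrightarrow> i \<le> n - 1 \<Longrightarrow>
       tvb_relator n [Rh i, Sg i, Rh i] [Gm (i+1), Gm i, Sg i, Gm i, Gm (i+1)]"

inductive tvb_eq :: "nat \<Rightarrow> tword \<Rightarrow> tword \<Rightarrow> bool" for n where
  refl: "tvb_eq n w w"
| sym: "tvb_eq n u v \<Longrightarrow> tvb_eq n v u"
| trans: "tvb_eq n u v \<Longrightarrow> tvb_eq n v w \<Longrightarrow> tvb_eq n u w"
| cong: "tvb_eq n u v \<Longrightarrow> tvb_eq n (x @ u @ y) (x @ v @ y)"
| cancel: "tvb_eq n [(g, b), (g, \<not> b)] []"
| rel: "tvb_relator n u v \<Longrightarrow> tvb_eq n (pos u) (pos v)"

text \<open>L_i(M) = diag(I_{i-1}, M, I_{n-i}) of size (n+1) x (n+1); M occupies rows/columns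
  i, i+1 (1-based), i.e. i-1, i (0-based).\<close>
definition Lmat :: "nat \<Rightarrow> nat \<Rightarrow> complex mat \<Rightarrow> complex mat" where
  "Lmat n i M = mat (n+1) (n+1) (\<lambda>(r, c).
     if i - 1 \<le> r \<and> r \<le> i \<and> i - 1 \<le> c \<and> c \<le> i then M $$ (r - (i - 1), c - (i - 1))
     else if r = c then 1 else 0)"

definition mat2 :: "complex \<Rightarrow> complex \<Rightarrow> complex \<Rightarrow> complex \<Rightarrow> complex mat" where
  "mat2 a b c d = mat_of_rows_list 2 [[a, b], [c, d]]"

fun gen_img :: "nat \<Rightarrow> complex mat \<Rightarrow> complex mat \<Rightarrow> complex mat \<Rightarrow> tgen \<Rightarrow> complex mat" where
  "gen_img n S R G (Sg k) = Lmat n k S"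
| "gen_img n S R G (Rh k) = Lmat n k R"
| "gen_img n S R G (Gm j) = Lmat n j G"

fun letter_img :: "nat \<Rightarrow> complex mat \<Rightarrow> complex mat \<Rightarrow> complex mat \<Rightarrow> tgen \<times> bool \<Rightarrow> complex mat" where
  "letter_img n S R G (g, True) = gen_img n S R G g"
| "letter_img n S R G (g, False) = the (mat_inverse (gen_img n S R G g))"

definition word_img :: "nat \<Rightarrow> complex mat \<Rightarrow> complex mat \<Rightarrow> complex mat \<Rightarrow> tword \<Rightarrow> complex mat" where
  "word_img n S R G w = foldr (\<lambda>l A. letter_img n S R G l * A) w (1\<^sub>m (n+1))"

definition unfaithful :: "nat \<Rightarrow> complex mat \<Rightarrow> complex mat \<Rightarrow> complex mat \<Rightarrow> bool" where
  "unfaithful n S R G = (\<exists>w1 w2. valid_word n w1 \<and> valid_word n w2 \<and> \<not> tvb_eq n w1 w2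
     \<and> word_img n S R G w1 = word_img n S R G w2)"

end

theory Submission
  imports Defs
begin

definition E :: "nat \<Rightarrow> (nat \<Rightarrow> nat \<Rightarrow> complex) \<Rightarrow> complex mat" where
  "E n f = mat (n+1) (n+1) (\<lambda>(r,c). if r<3 \<and> c<3 then f r c else if r=c then 1 else 0)"

definition pm :: "(nat \<Rightarrow> nat \<Rightarrow> complex) \<Rightarrow> (nat \<Rightarrow> nat \<Rightarrow> complex) \<Rightarrow> (nat \<Rightarrow> nat \<Rightarrow> complex)" where
  "pm f g = (\<lambda>r c. f r 0 * g 0 c + f r 1 * g 1 c + f r 2 * g 2 c)"

lemma E_mult:
  assumes "n \<ge> 2"
  shows "E n f * E n g = E n (pm f g)"
proof (rule eq_matI)
  fix r c assume r: "r < dim_row (E n (pm f g))" and c: "c < dim_col (E n (pm f g))"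
  let ?A = "E n f" and ?B = "E n g"
  have rn: "r < n+1" and cn: "c < n+1" using r c by (auto simp: E_def)
  have "(?A * ?B) $$ (r,c) = (\<Sum>k\<in>{0..<n+1}. ?A $$ (r,k) * ?B $$ (k,c))"
    using rn cn by (simp add: E_def scalar_prod_def)
  also have "\<dots> = E n (pm f g) $$ (r,c)"
  proof (cases "r < 3")
    case True
    note rT = True
    show ?thesis
    proof (cases "c < 3")
      case True
      have split: "{0..<n+1} = {0..<3} \<union> {3..<n+1}" using assms by auto
      have z: "(\<Sum>k\<in>{3..<n+1}. ?A $$ (r,k) * ?B $$ (k,c)) = 0"
        by (rule sum.neutral) (use rT in \<open>auto simp: E_def\<close>)
      have "(\<Sum>k\<in>{0..<n+1}. ?A $$ (r,k) * ?B $$ (k,c))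
          = (\<Sum>k\<in>{0..<3}. ?A $$ (r,k) * ?B $$ (k,c))"
        unfolding split by (subst sum.union_disjoint) (simp_all only: z finite_atLeastLessThan, auto)
      also have "\<dots> = pm f g r c"
        using rT True assms by (simp add: E_def pm_def numeral_3_eq_3 eval_nat_numeral)
      finally show ?thesis using rT True rn cn by (simp add: E_def)
    next
      case False
      have "(\<Sum>k\<in>{0..<n+1}. ?A $$ (r,k) * ?B $$ (k,c)) = 0"
        by (rule sum.neutral) (use rT False cn in \<open>auto simp: E_def\<close>)
      then show ?thesis using rT False rn cn by (simp add: E_def)
    qed
  next
    case False
    have "(\<Sum>k\<in>{0..<n+1}. ?A $$ (r,k) * ?B $$ (k,c)) = (\<Sum>k\<in>{0..<n+1}. if k = r then ?B $$ (r,c) else 0)"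
      by (rule sum.cong) (use False rn in \<open>auto simp: E_def\<close>)
    also have "\<dots> = ?B $$ (r,c)" using rn by simp
    finally show ?thesis using False rn cn by (simp add: E_def)
  qed
  finally show "(?A * ?B) $$ (r,c) = E n (pm f g) $$ (r,c)" .
qed (auto simp: E_def)

definition t3 :: "complex \<Rightarrow> complex \<Rightarrow> complex \<Rightarrow> complex \<Rightarrow> complex \<Rightarrow> complex \<Rightarrow> complex \<Rightarrow> complex \<Rightarrow> complex \<Rightarrow> nat \<Rightarrow> nat \<Rightarrow> complex" where
  "t3 a00 a01 a02 a10 a11 a12 a20 a21 a22 = (\<lambda>r c.
     if r = 0 then (if c = 0 then a00 else if c = 1 then a01 else a02)
     else if r = 1 then (if c = 0 then a10 else if c = 1 then a11 else a12)
     else (if c = 0 then a20 else if c = 1 then a21 else a22))"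

lemma pm_t3:
  "pm (t3 a00 a01 a02 a10 a11 a12 a20 a21 a22) (t3 b00 b01 b02 b10 b11 b12 b20 b21 b22) =
   t3 (a00*b00 + a01*b10 + a02*b20) (a00*b01 + a01*b11 + a02*b21) (a00*b02 + a01*b12 + a02*b22)
      (a10*b00 + a11*b10 + a12*b20) (a10*b01 + a11*b11 + a12*b21) (a10*b02 + a11*b12 + a12*b22)
      (a20*b00 + a21*b10 + a22*b20) (a20*b01 + a21*b11 + a22*b21) (a20*b02 + a21*b12 + a22*b22)"
  by (simp add: pm_def t3_def fun_eq_iff)

lemma mat2_idx: "mat2 a b c d $$ (0,0) = a" "mat2 a b c d $$ (0,1) = b"
  "mat2 a b c d $$ (1,0) = c" "mat2 a b c d $$ (1,1) = d"
  by (simp_all add: mat2_def mat_of_rows_list_def)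

lemma mat2_gen: "i < 2 \<Longrightarrow> j < 2 \<Longrightarrow> mat2 a b c d $$ (i,j) = (if i = 0 then (if j = 0 then a else b) else (if j = 0 then c else d))"
  by (auto simp: mat2_def mat_of_rows_list_def less_2_cases_iff)

lemma L1_E: "n \<ge> 2 \<Longrightarrow> Lmat n 1 (mat2 a b c d) = E n (t3 a b 0 c d 0 0 0 1)"
  apply (rule eq_matI)
  by (auto simp: Lmat_def E_def t3_def mat2_gen)

lemma L2_E: "n \<ge> 2 \<Longrightarrow> Lmat n 2 (mat2 a b c d) = E n (t3 1 0 0 0 a b 0 c d)"
  apply (rule eq_matI)
  by (auto simp: Lmat_def E_def t3_def mat2_gen)

lemma one_E: "1\<^sub>m (n+1) = E n (t3 1 0 0 0 1 0 0 0 1)"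
  by (rule eq_matI) (auto simp: E_def t3_def)

definition w1 :: tword where "w1 = pos [Sg 1, Rh 1, Rh 2, Sg 1, Rh 1, Rh 2]"
definition w2 :: tword where "w2 = pos [Rh 2, Sg 1, Rh 1, Rh 2, Sg 1, Rh 1]"

lemma img_eq:
  assumes "n \<ge> 2" "r * r' = 1"
  shows "word_img n (mat2 0 b c 0) (mat2 0 r r' 0) G w1 = word_img n (mat2 0 b c 0) (mat2 0 r r' 0) G w2"
  using assms
  apply (simp add: w1_def w2_def pos_def word_img_def L1_E L2_E one_E E_mult pm_t3 del: One_nat_def)
  apply (simp add: algebra_simps)
  done

definition tr :: "nat \<Rightarrow> nat \<Rightarrow> nat \<Rightarrow> nat" where
  "tr a b x = (if x = a then b else if x = b then a else x)"

fun rperm :: "tword \<Rightarrow> nat \<Rightarrow> nat" where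
  "rperm [] = id"
| "rperm ((Rh k, _) # w) = tr k (k+1) \<circ> rperm w"
| "rperm ((Sg k, _) # w) = rperm w"
| "rperm ((Gm k, _) # w) = rperm w"

fun sexp :: "tword \<Rightarrow> int" where
  "sexp [] = 0"
| "sexp ((Sg k, b) # w) = (if b then 1 else -1) + sexp w"
| "sexp ((Rh k, _) # w) = sexp w"
| "sexp ((Gm k, _) # w) = sexp w"

lemma rperm_app: "rperm (x @ y) = rperm x \<circ> rperm y"
  by (induction x rule: rperm.induct) (auto simp: comp_assoc)

lemma sexp_app: "sexp (x @ y) = sexp x + sexp y"
  by (induction x rule: sexp.induct) auto

lemma rel_inv: "tvb_relator n u v \<Longrightarrow> rperm (pos u) = rperm (pos v) \<and> sexp (pos u) = sexp (pos v)"
  by (induction rule: tvb_relator.induct) (auto simp: pos_def fun_eq_iff tr_def)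

lemma eq_inv: "tvb_eq n u v \<Longrightarrow> rperm u = rperm v \<and> sexp u = sexp v"
proof (induction rule: tvb_eq.induct)
  case (cancel g b)
  then show ?case by (cases g) (auto simp: fun_eq_iff tr_def)
next
  case (rel u v)
  then show ?case by (rule rel_inv)
qed (auto simp: rperm_app sexp_app)

lemma w12_neq: "\<not> tvb_eq n w1 w2"
proof
  assume "tvb_eq n w1 w2"
  then have "rperm w1 1 = rperm w2 1" using eq_inv by metis
  then show False by (simp add: w1_def w2_def pos_def tr_def)
qed

lemma caseA:
  assumes "n \<ge> 3" "r * r' = 1"
  shows "unfaithful n (mat2 0 b c 0) (mat2 0 r r' 0) G"
  unfolding unfaithful_def
  apply (rule exI[of _ w1], rule exI[of _ w2])
  using assms w12_neq img_eq[of n r r' b c G]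
  by (auto simp: valid_word_def w1_def w2_def pos_def)

lemma caseB:
  assumes "n \<ge> 3"
  shows "unfaithful n (mat2 1 0 0 1) R G"
  unfolding unfaithful_def
proof (intro exI conjI)
  show "valid_word n [(Sg 1, True)]" using assms by (simp add: valid_word_def)
  show "valid_word n []" by (simp add: valid_word_def)
  show "\<not> tvb_eq n [(Sg 1, True)] []"
    using eq_inv[of n "[(Sg 1, True)]" "[]"] by auto
  show "word_img n (mat2 1 0 0 1) R G [(Sg 1, True)] = word_img n (mat2 1 0 0 1) R G []"
    using assms by (simp add: word_img_def L1_E one_E E_mult pm_t3 del: One_nat_def)
qed

theorem theorem3p5:
  fixes n :: nat
  assumes "n \<ge> 3"
  shows
    "(\<forall>b c sb sc :: complex. b \<noteq> 0 \<longrightarrow> c \<noteq> 0 \<longrightarrow> sb\<^sup>2 = b \<longrightarrow> sc\<^sup>2 = c \<longrightarrow>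
        unfaithful n (mat2 0 b c 0) (mat2 0 (- sb / sc) (- sc / sb) 0) (mat2 (-1) 0 0 1))
   \<and> (\<forall>b c sb sc :: complex. b \<noteq> 0 \<longrightarrow> c \<noteq> 0 \<longrightarrow> sb\<^sup>2 = b \<longrightarrow> sc\<^sup>2 = c \<longrightarrow>
        unfaithful n (mat2 0 b c 0) (mat2 0 (sb / sc) (sc / sb) 0) (mat2 (-1) 0 0 1))
   \<and> (\<forall>b c sb sc :: complex. b \<noteq> 0 \<longrightarrow> c \<noteq> 0 \<longrightarrow> sb\<^sup>2 = b \<longrightarrow> sc\<^sup>2 = c \<longrightarrow>
        unfaithful n (mat2 0 b c 0) (mat2 0 (- sb / sc) (- sc / sb) 0) (mat2 1 0 0 1))
   \<and> (\<forall>b c sb sc :: complex. b \<noteq> 0 \<longrightarrow> c \<noteq> 0 \<longrightarrow> sb\<^sup>2 = b \<longrightarrow> sc\<^sup>2 = c \<longrightarrow>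
        unfaithful n (mat2 0 b c 0) (mat2 0 (sb / sc) (sc / sb) 0) (mat2 1 0 0 1))
   \<and> (\<forall>x :: complex. x \<noteq> 0 \<longrightarrow>
        unfaithful n (mat2 1 0 0 1) (mat2 0 x (1 / x) 0) (mat2 (-1) 0 0 1))
   \<and> (\<forall>x :: complex. x \<noteq> 0 \<longrightarrow>
        unfaithful n (mat2 1 0 0 1) (mat2 0 x (1 / x) 0) (mat2 1 0 0 1))
   \<and> unfaithful n (mat2 1 0 0 1) (mat2 1 0 0 1) (mat2 1 0 0 1)"
proof -
  have key: "(- sb / sc) * (- sc / sb) = 1" "(sb / sc) * (sc / sb) = 1"
    if "b \<noteq> 0" "c \<noteq> 0" "sb\<^sup>2 = b" "sc\<^sup>2 = c" for b c sb sc :: complex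
  proof -
    have "sb \<noteq> 0" "sc \<noteq> 0" using that by auto
    then show "(- sb / sc) * (- sc / sb) = 1" "(sb / sc) * (sc / sb) = 1" by (auto simp: field_simps)
  qed
  show ?thesis
    using assms key caseA caseB by blast
qed

end
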